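(* Let $A$ be a rational $m\times n$ matrix of full row rank with $m\geq 2$, and let $r=A_i$ be a row of $A$ all of whose entries lie in $\{0,1,-1\}$. Then $A$ is equimodular if and only if the trim $A/\!\!/(i,j)$ is equimodular for every $j\in\operatorname{supp}(r)$.
   Context: An $m\times n$ matrix is equimodular if it has full row rank $m$ and all its nonzero $m\times m$ minors have the same absolute value. $\operatorname{supp}(x)$ is the set of indices of nonzero coordinates of $x$. For a position $p=(i,j)$ with $A_i^j\neq0$, the pivot $A/p$ is obtained from $A$ by dividing row $i$ by $A_i^j$ and adding suitable multiples of this new row to the other rows so that column $j$ becomes the $i$-th unit vector; the trim $A/\!\!/p$ is obtained from $A/p$ by deleting row $i$ and column $j$. *)

theory Defs
  imports "Jordan_Normal_Form.DL_Rank" "Jordan_Normal_Form.DL_Submatrix" "Jordan_Normal_Form.Determinant"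
begin

definition full_row_rank :: "rat mat \<Rightarrow> bool" where
  "full_row_rank A \<longleftrightarrow> vec_space.rank (dim_row A) A = dim_row A"

definition minor_cols :: "rat mat \<Rightarrow> nat set \<Rightarrow> rat" where
  "minor_cols A J = det (submatrix A {..<dim_row A} J)"

definition equimodular :: "rat mat \<Rightarrow> bool" where
  "equimodular A \<longleftrightarrow> full_row_rank A \<and>
     (\<forall>J J'. J \<subseteq> {..<dim_col A} \<and> card J = dim_row A \<and>
             J' \<subseteq> {..<dim_col A} \<and> card J' = dim_row A \<and>
             minor_cols A J \<noteq> 0 \<and> minor_cols A J' \<noteq> 0
             \<longrightarrow> \<bar>minor_cols A J\<bar> = \<bar>minor_cols A J'\<bar>)"

definition pivot :: "rat mat \<Rightarrow> nat \<Rightarrow> nat \<Rightarrow> rat mat" where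
  "pivot A i j = mat (dim_row A) (dim_col A)
     (\<lambda>(k,l). if k = i then A $$ (i,l) / A $$ (i,j)
              else A $$ (k,l) - A $$ (k,j) * (A $$ (i,l) / A $$ (i,j)))"

definition trim :: "rat mat \<Rightarrow> nat \<Rightarrow> nat \<Rightarrow> rat mat" where
  "trim A i j = submatrix (pivot A i j) ({..<dim_row A} - {i}) ({..<dim_col A} - {j})"

end

theory Submission imports Defs "Jordan_Normal_Form.DL_Rank_Submatrix" begin

lemma pick_lessThan: "a < m \<Longrightarrow> pick {..<m} a = a"
proof -
  assume "a<m"
  have "{x\<in>{..<m}. x < a} = {..<a}" using \<open>a<m\<close> by auto
  then have "card {x\<in>{..<m}. x < a} = a" by simp
  thus ?thesis using pick_card_in_set[of a "{..<m}"] \<open>a<m\<close> by auto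
qed

lemma pick_remove:
  assumes "finite J" "t < card J" "b < card J - 1"
  shows "pick (J - {pick J t}) b = pick J (insert_index t b)"
proof -
  define c where "c = pick J t"
  define y where "y = pick J (insert_index t b)"
  have ins: "insert_index t b < card J" using assms unfolding insert_index_def by auto
  have y: "y \<in> J" using pick_in_set[of _ J] ins unfolding y_def by auto
  have cnt: "card {a\<in>J. a < y} = insert_index t b" using card_pick ins unfolding y_def by auto
  have main: "card {a \<in> J - {c}. a < y} = b \<and> y \<noteq> c"
  proof (cases "b < t")
    case True
    then have ib: "insert_index t b = b" by simp
    have "y < c" unfolding y_def c_def ib using pick_mono[of t J b] True assms by auto
    then have "{a \<in> J - {c}. a < y} = {a\<in>J. a<y}" by auto
    then show ?thesis using cnt ib \<open>y < c\<close> by auto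
  next
    case False
    then have ib: "insert_index t b = Suc b" by simp
    have "c < y" unfolding y_def c_def ib using pick_mono[of "Suc b" J t] False ins ib by auto
    have cJ: "c \<in> J" unfolding c_def using pick_in_set assms by auto
    have "{a \<in> J - {c}. a < y} = {a\<in>J. a<y} - {c}" by auto
    moreover have "c \<in> {a\<in>J. a<y}" using cJ \<open>c<y\<close> by auto
    ultimately have "card {a \<in> J - {c}. a < y} = card {a\<in>J. a<y} - 1"
      using assms(1) by (simp add: card_Diff_singleton)
    then show ?thesis using cnt ib \<open>c < y\<close> by auto
  qed
  have "pick (J - {c}) (card {a \<in> J - {c}. a < y}) = y"
    by (rule pick_card_in_set) (use y main in auto)
  then show ?thesis using main unfolding c_def y_def by simp
qed

lemma pick_bij:
  assumes "finite J"
  shows "bij_betw (pick J) {..<card J} J"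
proof (rule bij_betw_imageI)
  show "inj_on (pick J) {..<card J}"
  proof (rule inj_onI)
    fix x y assume x: "x \<in> {..<card J}" and y: "y \<in> {..<card J}" and e: "pick J x = pick J y"
    have 1: "card {a\<in>J. a < pick J x} = x" by (rule card_pick) (use x in blast)
    have 2: "card {a\<in>J. a < pick J y} = y" by (rule card_pick) (use y in blast)
    show "x = y" using 1 2 e by metis
  qed
  show "pick J ` {..<card J} = J"
  proof
    show "pick J ` {..<card J} \<subseteq> J"
    proof
      fix x assume "x \<in> pick J ` {..<card J}"
      then obtain t where t: "t < card J" "x = pick J t" by auto
      show "x \<in> J" using pick_in_set[of t J] t by simp
    qed
    show "J \<subseteq> pick J ` {..<card J}"
    proof
      fix c assume c: "c \<in> J"
      have "{a\<in>J. a<c} \<subset> J" using c by blast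
      then have lt: "card {a\<in>J. a<c} < card J" using assms by (simp add: psubset_card_mono)
      have "c = pick J (card {a\<in>J. a<c})" using pick_card_in_set[OF c] by simp
      then show "c \<in> pick J ` {..<card J}" using lt by blast
    qed
  qed
qed

lemma submatrix_carrier_sq:
  assumes X: "X \<in> carrier_mat m n" and J: "J \<subseteq> {..<n}" "card J = m"
  shows "submatrix X {..<m} J \<in> carrier_mat m m"
proof -
  have "{i. i<m \<and> i\<in>{..<m}} = {..<m}" by auto
  moreover have "{j. j<n \<and> j\<in>J} = J" using J by auto
  ultimately show ?thesis using X J by (intro carrier_matI) (simp_all only: dim_submatrix carrier_matD card_lessThan)
qed

lemma laplace_sub:
  assumes X: "X \<in> carrier_mat m n" and i: "i < m" and J: "J \<subseteq> {..<n}" "card J = m"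
  shows "det (submatrix X {..<m} J) = (\<Sum>c\<in>J. (-1)^(i + card {x\<in>J. x < c}) * X $$ (i,c) * det (submatrix X ({..<m}-{i}) (J-{c})))"
proof -
  define B where "B = submatrix X {..<m} J"
  have B: "B \<in> carrier_mat m m" unfolding B_def by (rule submatrix_carrier_sq[OF X J])
  have fJ: "finite J" using J finite_subset by auto
  have rows: "{i. i<m \<and> i\<in>{..<m}} = {..<m}" by auto
  have cols: "{j. j<n \<and> j\<in>J} = J" using J by auto
  have Bij: "B $$ (a,b) = X $$ (a, pick J b)" if "a < m" "b < m" for a b
    unfolding B_def using that X J rows cols pick_lessThan by (simp add: submatrix_index)
  have "det B = (\<Sum>t<m. B $$ (i,t) * cofactor B i t)" by (rule laplace_expansion_row[OF B i])
  also have "\<dots> = (\<Sum>t<m. (-1)^(i + card {x\<in>J. x < pick J t}) * X $$ (i,pick J t) * det (submatrix X ({..<m}-{i}) (J-{pick J t})))"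
  proof (rule sum.cong[OF refl])
    fix t assume t: "t \<in> {..<m}"
    have ct: "card {x\<in>J. x < pick J t} = t" using card_pick t J by auto
    have md: "mat_delete B i t = submatrix X ({..<m}-{i}) (J-{pick J t})"
    proof (rule eq_matI)
      have r: "{a. a < dim_row X \<and> a \<in> {..<m}-{i}} = {..<m}-{i}" using X by auto
      have c: "{b. b < dim_col X \<and> b \<in> J-{pick J t}} = J-{pick J t}" using X J by auto
      have pJ: "pick J t \<in> J" using pick_in_set t J by auto
      have cr: "card ({..<m}-{i}) = m - 1" using i by simp
      have cc: "card (J-{pick J t}) = m - 1" using pJ fJ J by simp
      show dr: "dim_row (mat_delete B i t) = dim_row (submatrix X ({..<m} - {i}) (J - {pick J t}))"
        using B r cr by (simp add: dim_submatrix)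
      show dc: "dim_col (mat_delete B i t) = dim_col (submatrix X ({..<m} - {i}) (J - {pick J t}))"
        using B c cc by (simp add: dim_submatrix)
      fix a b assume a: "a < dim_row (submatrix X ({..<m} - {i}) (J - {pick J t}))"
        and b: "b < dim_col (submatrix X ({..<m} - {i}) (J - {pick J t}))"
      have a': "a < m - 1" using a r cr by (simp add: dim_submatrix)
      have b': "b < m - 1" using b c cc by (simp add: dim_submatrix)
      have ia: "insert_index i a < m" using a' i unfolding insert_index_def by auto
      have tb: "insert_index t b < m" using b' t unfolding insert_index_def by auto
      have "mat_delete B i t $$ (a,b) = B $$ (insert_index i a, insert_index t b)"
        unfolding mat_delete_def insert_index_def using a' b' B by auto
      also have "\<dots> = X $$ (insert_index i a, pick J (insert_index t b))" using Bij ia tb by auto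
      also have "pick J (insert_index t b) = pick (J - {pick J t}) b"
        using pick_remove[OF fJ] t b' J by auto
      also have "insert_index i a = pick ({..<m} - {i}) a"
        using pick_remove[of "{..<m}" i a] pick_lessThan[OF i] pick_lessThan[OF ia] i a' by auto
      also have "X $$ (pick ({..<m} - {i}) a, pick (J - {pick J t}) b) = submatrix X ({..<m} - {i}) (J - {pick J t}) $$ (a,b)"
        using a b by (simp add: submatrix_index dim_submatrix)
      finally show "mat_delete B i t $$ (a,b) = submatrix X ({..<m} - {i}) (J - {pick J t}) $$ (a,b)" .
    qed
    show "B $$ (i,t) * cofactor B i t = (-1)^(i + card {x\<in>J. x < pick J t}) * X $$ (i,pick J t) * det (submatrix X ({..<m}-{i}) (J-{pick J t}))"
      unfolding cofactor_def md ct using Bij i t by auto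
  qed
  also have "\<dots> = (\<Sum>c\<in>J. (-1)^(i + card {x\<in>J. x < c}) * X $$ (i,c) * det (submatrix X ({..<m}-{i}) (J-{c})))"
    using sum.reindex_bij_betw[OF pick_bij[OF fJ], of "\<lambda>c. (-1)^(i + card {x\<in>J. x < c}) * X $$ (i,c) * det (submatrix X ({..<m}-{i}) (J-{c}))"] J by simp
  finally show ?thesis unfolding B_def .
qed


lemma det_zero_col:
  assumes B: "B \<in> carrier_mat n n" and t: "t < n" and z: "\<And>k. k < n \<Longrightarrow> B $$ (k,t) = 0"
  shows "det B = 0"
proof -
  have "det B = (\<Sum>k<n. B $$ (k,t) * cofactor B k t)" by (rule laplace_expansion_column[OF B t])
  also have "\<dots> = 0" using z by simp
  finally show ?thesis .
qed

lemma sub_carrier2: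
  assumes X: "X \<in> carrier_mat m n" and i: "i < m" and S: "S \<subseteq> {..<n}" "card S = m - 1"
  shows "submatrix X ({..<m}-{i}) S \<in> carrier_mat (m-1) (m-1)"
proof -
  have r: "{a. a < dim_row X \<and> a \<in> {..<m}-{i}} = {..<m}-{i}" using X by auto
  have c: "{b. b < dim_col X \<and> b \<in> S} = S" using X S by auto
  have cr: "card ({..<m}-{i}) = m - 1" using i by simp
  show ?thesis by (intro carrier_matI) (simp_all only: dim_submatrix r c cr S)
qed

lemma pick_in_R:
  assumes i: "i < m" and a: "a < m - 1"
  shows "pick ({..<m}-{i}) a = insert_index i a"
proof -
  have ia: "insert_index i a < m" using a i unfolding insert_index_def by auto
  have "pick ({..<m} - {pick {..<m} i}) a = pick {..<m} (insert_index i a)"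
    by (rule pick_remove) (use i a in auto)
  then show ?thesis using pick_lessThan[OF i] pick_lessThan[OF ia] by simp
qed

lemma laplace_unit_col:
  assumes X: "X \<in> carrier_mat m n" and i: "i < m" and J: "J \<subseteq> {..<n}" "card J = m" and jJ: "j \<in> J"
    and one: "X $$ (i,j) = 1" and zero: "\<And>k. k < m \<Longrightarrow> k \<noteq> i \<Longrightarrow> X $$ (k,j) = 0"
  shows "det (submatrix X {..<m} J) = (-1)^(i + card {x\<in>J. x < j}) * det (submatrix X ({..<m}-{i}) (J-{j}))"
proof -
  have fJ: "finite J" using J finite_subset by auto
  have z: "det (submatrix X ({..<m}-{i}) (J-{c})) = 0" if c: "c \<in> J - {j}" for c
  proof -
    define S where "S = J - {c}"
    have S: "S \<subseteq> {..<n}" "card S = m - 1" unfolding S_def using c J fJ by auto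
    have jS: "j \<in> S" unfolding S_def using c jJ by auto
    have fS: "finite S" using fJ unfolding S_def by auto
    define t where "t = card {x\<in>S. x < j}"
    have "{x\<in>S. x < j} \<subset> S" using jS by blast
    then have tS: "t < m - 1" unfolding t_def using S fS psubset_card_mono by metis
    have pt: "pick S t = j" unfolding t_def by (rule pick_card_in_set[OF jS])
    show ?thesis unfolding S_def[symmetric]
    proof (rule det_zero_col[OF sub_carrier2[OF X i S] tS])
      fix k assume k: "k < m - 1"
      have r: "{a. a < dim_row X \<and> a \<in> {..<m}-{i}} = {..<m}-{i}" using X by auto
      have cc: "{b. b < dim_col X \<and> b \<in> S} = S" using X S by auto
      have "submatrix X ({..<m}-{i}) S $$ (k,t) = X $$ (pick ({..<m}-{i}) k, pick S t)"
        by (rule submatrix_index) (simp_all only: r cc, use k i tS S in auto)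
      also have "\<dots> = X $$ (insert_index i k, j)" using pick_in_R[OF i k] pt by simp
      also have "\<dots> = 0" by (rule zero) (use k i in \<open>auto simp: insert_index_def\<close>)
      finally show "submatrix X ({..<m}-{i}) S $$ (k,t) = 0" .
    qed
  qed
  have "det (submatrix X {..<m} J) = (\<Sum>c\<in>J. (-1)^(i + card {x\<in>J. x < c}) * X $$ (i,c) * det (submatrix X ({..<m}-{i}) (J-{c})))"
    by (rule laplace_sub[OF X i J])
  also have "\<dots> = (-1)^(i + card {x\<in>J. x < j}) * X $$ (i,j) * det (submatrix X ({..<m}-{i}) (J-{j}))
     + (\<Sum>c\<in>J-{j}. (-1)^(i + card {x\<in>J. x < c}) * X $$ (i,c) * det (submatrix X ({..<m}-{i}) (J-{c})))"
    using sum.remove[OF fJ jJ] by blast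
  also have "(\<Sum>c\<in>J-{j}. (-1)^(i + card {x\<in>J. x < c}) * X $$ (i,c) * det (submatrix X ({..<m}-{i}) (J-{c}))) = 0"
    using z by simp
  finally show ?thesis using one by simp
qed

lemma det_rowop:
  fixes B :: "rat mat"
  assumes B: "B \<in> carrier_mat m m" and i: "i < m" and a: "a \<noteq> 0"
  shows "det (mat m m (\<lambda>(k,l). if k = i then B$$(i,l)/a else B$$(k,l) - c k * (B$$(i,l)/a))) = det B / a"
proof -
  define B1 where "B1 = multrow i (1/a) B"
  have B1: "B1 \<in> carrier_mat m m" unfolding B1_def using B by simp
  have dB1: "det B1 = 1/a * det B" unfolding B1_def by (rule det_multrow[OF i B])
  define M where "M S = mat m m (\<lambda>(k,l). if k \<in> S \<and> k \<noteq> i then B1$$(k,l) - c k * B1$$(i,l) else B1$$(k,l))" for S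
  have MC: "M S \<in> carrier_mat m m" for S unfolding M_def by simp
  have "det (M S) = det B1" if "finite S" for S
    using that
  proof (induction S rule: finite_induct)
    case empty
    have "M {} = B1" unfolding M_def using B1 by (intro eq_matI) auto
    then show ?case by simp
  next
    case (insert x S)
    show ?case
    proof (cases "x = i")
      case True
      have "M (insert x S) = M S" unfolding M_def using True by (intro eq_matI) auto
      then show ?thesis using insert by simp
    next
      case False
      have "M (insert x S) = addrow (- c x) x i (M S)"
        unfolding M_def mat_addrow_def using False insert(2) i by (intro eq_matI) auto
      then have "det (M (insert x S)) = det (M S)" using det_addrow[OF i False MC] by simp
      then show ?thesis using insert by simp
    qed
  qed
  then have "det (M {..<m}) = det B1" by simp
  moreover have "M {..<m} = mat m m (\<lambda>(k,l). if k = i then B$$(i,l)/a else B$$(k,l) - c k * (B$$(i,l)/a))"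
    unfolding M_def B1_def mat_multrow_def using B i by (intro eq_matI) auto
  ultimately show ?thesis using dB1 by simp
qed


lemma pivot_carrier: "A \<in> carrier_mat m n \<Longrightarrow> pivot A i j \<in> carrier_mat m n"
  unfolding pivot_def by auto

lemma pivot_index: "A \<in> carrier_mat m n \<Longrightarrow> k < m \<Longrightarrow> q < n \<Longrightarrow>
  pivot A i j $$ (k,q) = (if k = i then A $$ (i,q) / A $$ (i,j) else A $$ (k,q) - A $$ (k,j) * (A $$ (i,q) / A $$ (i,j)))"
  unfolding pivot_def by auto

lemma sub_index_sq:
  assumes X: "X \<in> carrier_mat m n" and J: "J \<subseteq> {..<n}" "card J = m" and k: "k < m" and l: "l < m"
  shows "submatrix X {..<m} J $$ (k,l) = X $$ (k, pick J l)"
proof -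
  have rows: "{i. i<dim_row X \<and> i\<in>{..<m}} = {..<m}" using X by auto
  have cols: "{j. j<dim_col X \<and> j\<in>J} = J" using J X by auto
  have "submatrix X {..<m} J $$ (k,l) = X $$ (pick {..<m} k, pick J l)"
    by (rule submatrix_index) (simp_all only: rows cols J, use k l in auto)
  then show ?thesis using pick_lessThan[OF k] by simp
qed

lemma det_pivot_sub:
  assumes A: "A \<in> carrier_mat m n" and i: "i < m" and j: "j < n" and a: "A $$ (i,j) \<noteq> 0"
    and J: "J \<subseteq> {..<n}" "card J = m"
  shows "det (submatrix (pivot A i j) {..<m} J) = det (submatrix A {..<m} J) / A $$ (i,j)"
proof -
  define B where "B = submatrix A {..<m} J"
  have B: "B \<in> carrier_mat m m" unfolding B_def by (rule submatrix_carrier_sq[OF A J])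
  have P: "pivot A i j \<in> carrier_mat m n" by (rule pivot_carrier[OF A])
  have pJ: "pick J l < n" if "l < m" for l
  proof -
    have "pick J l \<in> J" by (rule pick_in_set) (use that J in auto)
    then show ?thesis using J by auto
  qed
  have "submatrix (pivot A i j) {..<m} J = mat m m (\<lambda>(k,l). if k = i then B$$(i,l)/A $$ (i,j) else B$$(k,l) - A $$ (k,j) * (B$$(i,l)/A $$ (i,j)))"
  proof (rule eq_matI)
    show "dim_row (submatrix (pivot A i j) {..<m} J) = dim_row (mat m m (\<lambda>(k,l). if k = i then B$$(i,l)/A $$ (i,j) else B$$(k,l) - A $$ (k,j) * (B$$(i,l)/A $$ (i,j))))"
      using submatrix_carrier_sq[OF P J] by simp
    show "dim_col (submatrix (pivot A i j) {..<m} J) = dim_col (mat m m (\<lambda>(k,l). if k = i then B$$(i,l)/A $$ (i,j) else B$$(k,l) - A $$ (k,j) * (B$$(i,l)/A $$ (i,j))))"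
      using submatrix_carrier_sq[OF P J] by simp
    fix k l assume k: "k < dim_row (mat m m (\<lambda>(k,l). if k = i then B$$(i,l)/A $$ (i,j) else B$$(k,l) - A $$ (k,j) * (B$$(i,l)/A $$ (i,j))))"
      and l: "l < dim_col (mat m m (\<lambda>(k,l). if k = i then B$$(i,l)/A $$ (i,j) else B$$(k,l) - A $$ (k,j) * (B$$(i,l)/A $$ (i,j))))"
    have k': "k < m" and l': "l < m" using k l by auto
    show "submatrix (pivot A i j) {..<m} J $$ (k,l) = mat m m (\<lambda>(k,l). if k = i then B$$(i,l)/A $$ (i,j) else B$$(k,l) - A $$ (k,j) * (B$$(i,l)/A $$ (i,j))) $$ (k,l)"
      unfolding sub_index_sq[OF P J k' l'] pivot_index[OF A k' pJ[OF l']] B_def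
      using k' l' by (simp add: sub_index_sq[OF A J k' l'] sub_index_sq[OF A J i l'])
  qed
  then show ?thesis using det_rowop[OF B i a] unfolding B_def by simp
qed

lemma insert_index_less: "insert_index j x < insert_index j y \<longleftrightarrow> x < y"
  unfolding insert_index_def by auto

lemma pick_image_ins:
  assumes K: "finite K" and b: "b < card K"
  shows "pick (insert_index j ` K) b = insert_index j (pick K b)"
proof -
  define y0 where "y0 = pick K b"
  have y0: "y0 \<in> K" unfolding y0_def by (rule pick_in_set) (use b in auto)
  have c0: "card {k\<in>K. k < y0} = b" unfolding y0_def by (rule card_pick) (use b in auto)
  have inj: "inj (insert_index j)"
    by (rule injI) (metis insert_index_less nat_neq_iff)
  have "{x \<in> insert_index j ` K. x < insert_index j y0} = insert_index j ` {k\<in>K. k < y0}"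
    using insert_index_less by blast
  then have "card {x \<in> insert_index j ` K. x < insert_index j y0} = b"
    using c0 card_image[OF inj_on_subset[OF inj subset_UNIV]] by metis
  moreover have "pick (insert_index j ` K) (card {x \<in> insert_index j ` K. x < insert_index j y0}) = insert_index j y0"
    by (rule pick_card_in_set) (use y0 in blast)
  ultimately show ?thesis unfolding y0_def by simp
qed

lemma trim_sub:
  assumes A: "A \<in> carrier_mat m n" and i: "i < m" and j: "j < n" and K: "K \<subseteq> {..<n-1}"
  shows "submatrix (trim A i j) {..<m-1} K = submatrix (pivot A i j) ({..<m}-{i}) (insert_index j ` K)"
proof -
  define P where "P = pivot A i j"
  have P: "P \<in> carrier_mat m n" unfolding P_def by (rule pivot_carrier[OF A])
  have T: "trim A i j = submatrix P ({..<m}-{i}) ({..<n}-{j})" unfolding trim_def P_def using A by auto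
  have fK: "finite K" using K finite_subset by auto
  have r: "{a. a < dim_row P \<and> a \<in> {..<m}-{i}} = {..<m}-{i}" using P by auto
  have c: "{b. b < dim_col P \<and> b \<in> {..<n}-{j}} = {..<n}-{j}" using P by auto
  have cr: "card ({..<m}-{i}) = m - 1" using i by simp
  have cc: "card ({..<n}-{j}) = n - 1" using j by simp
  have Tc: "trim A i j \<in> carrier_mat (m-1) (n-1)" unfolding T
    by (intro carrier_matI) (simp_all only: dim_submatrix r c cr cc)
  have insK: "insert_index j ` K \<subseteq> {..<n}" using K j unfolding insert_index_def by auto
  have inj: "inj (insert_index j)"
    by (rule injI) (metis insert_index_less nat_neq_iff)
  have cK: "card (insert_index j ` K) = card K" using card_image[OF inj_on_subset[OF inj subset_UNIV]] by blast
  have r1: "{a. a < dim_row (trim A i j) \<and> a \<in> {..<m-1}} = {..<m-1}" using Tc by auto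
  have c1: "{b. b < dim_col (trim A i j) \<and> b \<in> K} = K" using Tc K by auto
  have c2: "{b. b < dim_col P \<and> b \<in> insert_index j ` K} = insert_index j ` K" using P insK by auto
  have pK: "pick K b < n - 1" if "b < card K" for b
  proof -
    have "pick K b \<in> K" by (rule pick_in_set) (use that in auto)
    then show ?thesis using K by auto
  qed
  show ?thesis unfolding P_def[symmetric]
  proof (rule eq_matI)
    show "dim_row (submatrix (trim A i j) {..<m - 1} K) = dim_row (submatrix P ({..<m} - {i}) (insert_index j ` K))"
      by (simp only: dim_submatrix r1 r cr card_lessThan)
    show "dim_col (submatrix (trim A i j) {..<m - 1} K) = dim_col (submatrix P ({..<m} - {i}) (insert_index j ` K))"
      by (simp only: dim_submatrix c1 c2 cK)
    fix a b assume a: "a < dim_row (submatrix P ({..<m} - {i}) (insert_index j ` K))"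
      and b: "b < dim_col (submatrix P ({..<m} - {i}) (insert_index j ` K))"
    have a': "a < m - 1" using a by (simp only: dim_submatrix r cr)
    have b': "b < card K" using b by (simp only: dim_submatrix c2 cK)
    have "submatrix (trim A i j) {..<m - 1} K $$ (a,b) = trim A i j $$ (pick {..<m-1} a, pick K b)"
      by (rule submatrix_index) (simp_all only: r1 c1, use a' b' in auto)
    also have "\<dots> = trim A i j $$ (a, pick K b)" using pick_lessThan[OF a'] by simp
    also have "\<dots> = P $$ (pick ({..<m}-{i}) a, pick ({..<n}-{j}) (pick K b))" unfolding T
      by (rule submatrix_index) (simp_all only: r c cr cc, use a' pK[OF b'] in auto)
    also have "pick ({..<n}-{j}) (pick K b) = insert_index j (pick K b)"
      by (rule pick_in_R[OF j pK[OF b']])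
    also have "insert_index j (pick K b) = pick (insert_index j ` K) b"
      using pick_image_ins[OF fK b'] by simp
    also have "P $$ (pick ({..<m}-{i}) a, pick (insert_index j ` K) b) = submatrix P ({..<m} - {i}) (insert_index j ` K) $$ (a,b)"
      by (rule submatrix_index[symmetric]) (simp_all only: r c2 cr cK, use a' b' in auto)
    finally show "submatrix (trim A i j) {..<m - 1} K $$ (a,b) = submatrix P ({..<m} - {i}) (insert_index j ` K) $$ (a,b)" .
  qed
qed


lemma (in vec_space) rank_le_nr:
  assumes A: "A \<in> carrier_mat n nc" shows "rank A \<le> n"
proof -
  obtain S where S: "maximal S (\<lambda>T. T \<subseteq> set (cols A) \<and> lin_indpt T)"
    using maximal_exists[of "(\<lambda>T. T \<subseteq> set (cols A) \<and> lin_indpt T)" "card (set (cols A))" "{}"]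
    by (meson List.finite_set card_mono empty_iff empty_subsetI finite_lin_indpt2 rev_finite_subset)
  then have S1: "S \<subseteq> set (cols A)" and S2: "lin_indpt S" unfolding maximal_def by auto
  have "set (cols A) \<subseteq> carrier_vec n" using cols_dim A by blast
  then have "card S \<le> dim" using li_le_dim(2)[OF fin_dim _ S2] S1 by auto
  then show ?thesis using rank_card_indpt[OF A S] dim_is_n by simp
qed

lemma (in vec_space) full_rank_minor:
  assumes A: "A \<in> carrier_mat n nc" and r: "rank A = n"
  shows "\<exists>J \<subseteq> {..<nc}. card J = n \<and> det (submatrix A {..<n} J) \<noteq> 0"
proof -
  obtain S where S: "maximal S (\<lambda>T. T \<subseteq> set (cols A) \<and> lin_indpt T)"
    using maximal_exists[of "(\<lambda>T. T \<subseteq> set (cols A) \<and> lin_indpt T)" "card (set (cols A))" "{}"]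
    by (meson List.finite_set card_mono empty_iff empty_subsetI finite_lin_indpt2 rev_finite_subset)
  then have S1: "S \<subseteq> set (cols A)" and S2: "lin_indpt S" unfolding maximal_def by auto
  have cS: "card S = n" using rank_card_indpt[OF A S] r by simp
  define f where "f v = (SOME j. j < nc \<and> col A j = v)" for v
  have f: "f v < nc \<and> col A (f v) = v" if "v \<in> S" for v
  proof -
    have "v \<in> set (cols A)" using that S1 by auto
    then obtain j where "j < length (cols A)" "cols A ! j = v" by (metis in_set_conv_nth)
    then have "j < nc \<and> col A j = v" using A by auto
    then show ?thesis unfolding f_def by (rule someI)
  qed
  define J where "J = f ` S"
  have injf: "inj_on f S" by (rule inj_onI) (metis f)
  have J1: "J \<subseteq> {..<nc}" unfolding J_def using f by auto
  have J2: "card J = n" unfolding J_def using card_image[OF injf] cS by simp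
  have colJ: "col A ` J = S" unfolding J_def using f using f by (auto simp: image_image)
  have fJ: "finite J" using J1 finite_subset by auto
  define B where "B = submatrix A {..<n} J"
  have B: "B \<in> carrier_mat n n" unfolding B_def by (rule submatrix_carrier_sq[OF A J1 J2])
  have colB: "col B k = col A (pick J k)" if k: "k < n" for k
  proof (rule eq_vecI)
    show "dim_vec (col B k) = dim_vec (col A (pick J k))" using A B by simp
    fix r assume "r < dim_vec (col A (pick J k))"
    then have rn: "r < n" using A by simp
    have pk: "pick J k < nc"
    proof -
      have "pick J k \<in> J" by (rule pick_in_set) (use k J2 in auto)
      then show ?thesis using J1 by auto
    qed
    show "col B k $ r = col A (pick J k) $ r"
      using sub_index_sq[OF A J1 J2 rn k] B A rn pk k unfolding B_def by simp
  qed
  have setB: "set (cols B) = S"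
  proof -
    have "set (cols B) = col B ` {..<n}" using B by (auto simp: cols_def)
    also have "\<dots> = col A ` (pick J ` {..<n})" using colB by (auto simp: image_image)
    also have "pick J ` {..<n} = J" using bij_betw_imp_surj_on[OF pick_bij[OF fJ]] J2 by simp
    finally show ?thesis using colJ by simp
  qed
  have distB: "distinct (cols B)"
  proof -
    have "card (set (cols B)) = n" using setB cS by simp
    moreover have "length (cols B) = n" using B by simp
    ultimately show ?thesis using card_distinct by metis
  qed
  have "det B \<noteq> 0"
  proof
    assume "det B = 0"
    then obtain v where "v \<in> carrier_vec n" "v \<noteq> 0\<^sub>v n" "B *\<^sub>v v = 0\<^sub>v n"
      using det_0_iff_vec_prod_zero_field[OF B] by blast
    then have "lin_dep (set (cols B))" using lin_depI[OF B _ _ _ distB] by blast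
    then show False using S2 setB by simp
  qed
  then show ?thesis using J1 J2 unfolding B_def by blast
qed


lemma zero_col_sub:
  assumes X: "X \<in> carrier_mat m n" and i: "i < m" and S: "S \<subseteq> {..<n}" "card S = m - 1" and jS: "j \<in> S"
    and zero: "\<And>k. k < m \<Longrightarrow> k \<noteq> i \<Longrightarrow> X $$ (k,j) = 0"
  shows "det (submatrix X ({..<m}-{i}) S) = 0"
proof -
  have fS: "finite S" using S finite_subset by auto
  define t where "t = card {x\<in>S. x < j}"
  have "{x\<in>S. x < j} \<subset> S" using jS by blast
  then have tS: "t < m - 1" unfolding t_def using S fS psubset_card_mono by metis
  have pt: "pick S t = j" unfolding t_def by (rule pick_card_in_set[OF jS])
  show ?thesis
  proof (rule det_zero_col[OF sub_carrier2[OF X i S] tS])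
    fix k assume k: "k < m - 1"
    have r: "{a. a < dim_row X \<and> a \<in> {..<m}-{i}} = {..<m}-{i}" using X by auto
    have cc: "{b. b < dim_col X \<and> b \<in> S} = S" using X S by auto
    have "submatrix X ({..<m}-{i}) S $$ (k,t) = X $$ (pick ({..<m}-{i}) k, pick S t)"
      by (rule submatrix_index) (simp_all only: r cc, use k i tS S in auto)
    also have "\<dots> = X $$ (insert_index i k, j)" using pick_in_R[OF i k] pt by simp
    also have "\<dots> = 0" by (rule zero) (use k i in \<open>auto simp: insert_index_def\<close>)
    finally show "submatrix X ({..<m}-{i}) S $$ (k,t) = 0" .
  qed
qed

lemma pivot_col:
  assumes A: "A \<in> carrier_mat m n" and i: "i < m" and j: "j < n" and a: "A $$ (i,j) \<noteq> 0"
  shows "pivot A i j $$ (i,j) = 1" "\<And>k. k < m \<Longrightarrow> k \<noteq> i \<Longrightarrow> pivot A i j $$ (k,j) = 0"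
  using pivot_index[OF A _ j] i a by auto

lemma key_abs:
  assumes A: "A \<in> carrier_mat m n" and i: "i < m" and j: "j < n" and a: "\<bar>A $$ (i,j)\<bar> = 1"
    and J: "J \<subseteq> {..<n}" "card J = m" and jJ: "j \<in> J"
  shows "\<bar>det (submatrix A {..<m} J)\<bar> = \<bar>det (submatrix (pivot A i j) ({..<m}-{i}) (J-{j}))\<bar>"
proof -
  have a0: "A $$ (i,j) \<noteq> 0" using a by auto
  have P: "pivot A i j \<in> carrier_mat m n" by (rule pivot_carrier[OF A])
  have "det (submatrix (pivot A i j) {..<m} J) = (-1)^(i + card {x\<in>J. x < j}) * det (submatrix (pivot A i j) ({..<m}-{i}) (J-{j}))"
    by (rule laplace_unit_col[OF P i J jJ pivot_col[OF A i j a0]])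
  moreover have "det (submatrix (pivot A i j) {..<m} J) = det (submatrix A {..<m} J) / A $$ (i,j)"
    by (rule det_pivot_sub[OF A i j a0 J])
  ultimately have "\<bar>det (submatrix A {..<m} J) / A $$ (i,j)\<bar> = \<bar>det (submatrix (pivot A i j) ({..<m}-{i}) (J-{j}))\<bar>"
    by (simp add: abs_mult)
  then show ?thesis using a by (simp add: abs_divide)
qed

lemma trim_carrier:
  assumes A: "A \<in> carrier_mat m n" and i: "i < m" and j: "j < n"
  shows "trim A i j \<in> carrier_mat (m-1) (n-1)"
proof -
  define P where "P = pivot A i j"
  have P: "P \<in> carrier_mat m n" unfolding P_def by (rule pivot_carrier[OF A])
  have T: "trim A i j = submatrix P ({..<m}-{i}) ({..<n}-{j})" unfolding trim_def P_def using A by auto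
  have r: "{a. a < dim_row P \<and> a \<in> {..<m}-{i}} = {..<m}-{i}" using P by auto
  have c: "{b. b < dim_col P \<and> b \<in> {..<n}-{j}} = {..<n}-{j}" using P by auto
  have cr: "card ({..<m}-{i}) = m - 1" using i by simp
  have cc: "card ({..<n}-{j}) = n - 1" using j by simp
  show ?thesis unfolding T by (intro carrier_matI) (simp_all only: dim_submatrix r c cr cc)
qed

lemma trim_minor_eq:
  assumes A: "A \<in> carrier_mat m n" and i: "i < m" and j: "j < n" and K: "K \<subseteq> {..<n-1}"
  shows "minor_cols (trim A i j) K = det (submatrix (pivot A i j) ({..<m}-{i}) (insert_index j ` K))"
  unfolding minor_cols_def using trim_carrier[OF A i j] trim_sub[OF A i j K] by simp

lemma ins_facts:
  assumes j: "j < n" and K: "K \<subseteq> {..<n-1}"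
  shows "insert_index j ` K \<subseteq> {..<n}-{j}" "card (insert_index j ` K) = card K"
proof -
  show "insert_index j ` K \<subseteq> {..<n}-{j}" using K j insert_index_exclude unfolding insert_index_def by auto
  have inj: "inj (insert_index j)"
    by (rule injI) (metis insert_index_less nat_neq_iff)
  show "card (insert_index j ` K) = card K" using card_image[OF inj_on_subset[OF inj subset_UNIV]] by blast
qed

lemma back_rep:
  assumes j: "j < n" and S: "S \<subseteq> {..<n}-{j}"
  shows "delete_index j ` S \<subseteq> {..<n-1}" "insert_index j ` (delete_index j ` S) = S"
    "card (delete_index j ` S) = card S"
proof -
  show "delete_index j ` S \<subseteq> {..<n-1}" using S j unfolding delete_index_def by auto
  show "insert_index j ` (delete_index j ` S) = S"
  proof -
    have "insert_index j (delete_index j x) = x" if "x \<in> S" for x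
      by (rule insert_delete_index) (use that S in auto)
    then show ?thesis by (force simp: image_image)
  qed
  then show "card (delete_index j ` S) = card S"
    using ins_facts[OF j \<open>delete_index j ` S \<subseteq> {..<n-1}\<close>] by simp
qed

lemma same_trim:
  assumes A: "A \<in> carrier_mat m n" and i: "i < m" and j: "j < n" and a: "\<bar>A $$ (i,j)\<bar> = 1"
    and eq: "equimodular (trim A i j)"
    and J: "J \<subseteq> {..<n}" "card J = m" "j \<in> J" "det (submatrix A {..<m} J) \<noteq> 0"
    and J': "J' \<subseteq> {..<n}" "card J' = m" "j \<in> J'" "det (submatrix A {..<m} J') \<noteq> 0"
  shows "\<bar>det (submatrix A {..<m} J)\<bar> = \<bar>det (submatrix A {..<m} J')\<bar>"
proof -
  have Tc: "trim A i j \<in> carrier_mat (m-1) (n-1)" by (rule trim_carrier[OF A i j])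
  have fJ: "finite J" "finite J'" using J J' finite_subset by auto
  define K where "K = delete_index j ` (J - {j})"
  define K' where "K' = delete_index j ` (J' - {j})"
  have S: "J - {j} \<subseteq> {..<n}-{j}" "J' - {j} \<subseteq> {..<n}-{j}" using J J' by auto
  note b1 = back_rep[OF j S(1), folded K_def] and b2 = back_rep[OF j S(2), folded K'_def]
  have cK: "card K = m - 1" "card K' = m - 1" using b1 b2 J J' fJ by auto
  have mK: "minor_cols (trim A i j) K = det (submatrix (pivot A i j) ({..<m}-{i}) (J-{j}))"
    using trim_minor_eq[OF A i j b1(1)] b1(2) by simp
  have mK': "minor_cols (trim A i j) K' = det (submatrix (pivot A i j) ({..<m}-{i}) (J'-{j}))"
    using trim_minor_eq[OF A i j b2(1)] b2(2) by simp
  have k1: "\<bar>det (submatrix A {..<m} J)\<bar> = \<bar>minor_cols (trim A i j) K\<bar>"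
    using key_abs[OF A i j a J(1,2,3)] mK by simp
  have k2: "\<bar>det (submatrix A {..<m} J')\<bar> = \<bar>minor_cols (trim A i j) K'\<bar>"
    using key_abs[OF A i j a J'(1,2,3)] mK' by simp
  have n1: "minor_cols (trim A i j) K \<noteq> 0" using k1 J(4) by auto
  have n2: "minor_cols (trim A i j) K' \<noteq> 0" using k2 J'(4) by auto
  have H: "\<forall>J J'. J \<subseteq> {..<n-1} \<and> card J = m-1 \<and> J' \<subseteq> {..<n-1} \<and> card J' = m-1 \<and>
      minor_cols (trim A i j) J \<noteq> 0 \<and> minor_cols (trim A i j) J' \<noteq> 0 \<longrightarrow>
      \<bar>minor_cols (trim A i j) J\<bar> = \<bar>minor_cols (trim A i j) J'\<bar>"
    using eq Tc unfolding equimodular_def by auto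
  have "\<bar>minor_cols (trim A i j) K\<bar> = \<bar>minor_cols (trim A i j) K'\<bar>"
    using H b1(1) b2(1) cK n1 n2 by blast
  then show ?thesis using k1 k2 by simp
qed

lemma exists_term:
  assumes "(\<Sum>c\<in>J. f c) \<noteq> (0::rat)"
  shows "\<exists>c\<in>J. f c \<noteq> 0"
  using assms sum.neutral by metis


lemma ins_J:
  assumes j: "j < n" and K: "K \<subseteq> {..<n-1}" and cK: "card K = m - 1" and m: "m \<ge> 1"
  shows "insert j (insert_index j ` K) \<subseteq> {..<n}" "card (insert j (insert_index j ` K)) = m"
    "insert j (insert_index j ` K) - {j} = insert_index j ` K"
proof -
  note f = ins_facts[OF j K]
  show "insert j (insert_index j ` K) \<subseteq> {..<n}" using f j by auto
  have fK: "finite (insert_index j ` K)" using f(1) finite_subset by blast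
  have "j \<notin> insert_index j ` K" using f(1) by auto
  then show "card (insert j (insert_index j ` K)) = m" using f(2) cK m fK by simp
  show "insert j (insert_index j ` K) - {j} = insert_index j ` K" using \<open>j \<notin> insert_index j ` K\<close> by auto
qed

lemma fwd:
  assumes A: "A \<in> carrier_mat m n" and i: "i < m" and j: "j < n" and a: "\<bar>A $$ (i,j)\<bar> = 1"
    and eq: "equimodular A"
  shows "equimodular (trim A i j)"
proof -
  have m1: "m \<ge> 1" using i by auto
  have a0: "A $$ (i,j) \<noteq> 0" using a by auto
  define P where "P = pivot A i j"
  have P: "P \<in> carrier_mat m n" unfolding P_def by (rule pivot_carrier[OF A])
  have Tc: "trim A i j \<in> carrier_mat (m-1) (n-1)" by (rule trim_carrier[OF A i j])
  have eqA: "\<forall>J J'. J \<subseteq> {..<n} \<and> card J = m \<and> J' \<subseteq> {..<n} \<and> card J' = m \<and>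
      det (submatrix A {..<m} J) \<noteq> 0 \<and> det (submatrix A {..<m} J') \<noteq> 0 \<longrightarrow>
      \<bar>det (submatrix A {..<m} J)\<bar> = \<bar>det (submatrix A {..<m} J')\<bar>"
    using eq A unfolding equimodular_def minor_cols_def by auto
  have rA: "vec_space.rank m A = m" using eq A unfolding equimodular_def full_row_rank_def by auto
  obtain J0 where J0: "J0 \<subseteq> {..<n}" "card J0 = m" "det (submatrix A {..<m} J0) \<noteq> 0"
    using vec_space.full_rank_minor[OF A rA] by blast
  have "det (submatrix P {..<m} J0) \<noteq> 0"
    using det_pivot_sub[OF A i j a0 J0(1,2)] J0(3) a0 unfolding P_def by simp
  then have "(\<Sum>c\<in>J0. (-1)^(i + card {x\<in>J0. x < c}) * P $$ (i,c) * det (submatrix P ({..<m}-{i}) (J0-{c}))) \<noteq> 0"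
    using laplace_sub[OF P i J0(1,2)] by simp
  then obtain c where c: "c \<in> J0" "(-1)^(i + card {x\<in>J0. x < c}) * P $$ (i,c) * det (submatrix P ({..<m}-{i}) (J0-{c})) \<noteq> 0"
    using exists_term by blast
  have D: "det (submatrix P ({..<m}-{i}) (J0-{c})) \<noteq> 0" using c(2) by auto
  have fJ0: "finite J0" using J0 finite_subset by auto
  have S: "J0 - {c} \<subseteq> {..<n}" "card (J0 - {c}) = m - 1" using J0 c fJ0 by auto
  have jS: "j \<notin> J0 - {c}"
  proof
    assume "j \<in> J0 - {c}"
    then have "det (submatrix P ({..<m}-{i}) (J0-{c})) = 0"
      using zero_col_sub[OF P i S] pivot_col(2)[OF A i j a0] unfolding P_def by blast
    then show False using D by simp
  qed
  have S': "J0 - {c} \<subseteq> {..<n}-{j}" using S jS by auto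
  define K where "K = delete_index j ` (J0 - {c})"
  note b = back_rep[OF j S', folded K_def]
  have mK: "minor_cols (trim A i j) K \<noteq> 0"
    using trim_minor_eq[OF A i j b(1)] b(2) D unfolding P_def by simp
  have rk: "vec_space.rank (m-1) (trim A i j) = m - 1"
  proof (rule antisym)
    show "vec_space.rank (m-1) (trim A i j) \<le> m - 1" by (rule vec_space.rank_le_nr[OF Tc])
    have "det (submatrix (trim A i j) {..<m-1} K) \<noteq> 0" using mK Tc unfolding minor_cols_def by simp
    then have "card {j. j < n-1 \<and> j \<in> K} \<le> vec_space.rank (m-1) (trim A i j)"
      by (rule vec_space.rank_gt_minor[OF Tc])
    moreover have "{j. j < n-1 \<and> j \<in> K} = K" using b(1) by auto
    ultimately show "m - 1 \<le> vec_space.rank (m-1) (trim A i j)" using b(3) S(2) by simp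
  qed
  have fr: "full_row_rank (trim A i j)" unfolding full_row_rank_def using rk Tc by simp
  have em: "\<bar>minor_cols (trim A i j) K1\<bar> = \<bar>minor_cols (trim A i j) K2\<bar>"
    if K1: "K1 \<subseteq> {..<n-1}" "card K1 = m - 1" "minor_cols (trim A i j) K1 \<noteq> 0"
    and K2: "K2 \<subseteq> {..<n-1}" "card K2 = m - 1" "minor_cols (trim A i j) K2 \<noteq> 0" for K1 K2
  proof -
    note I1 = ins_J[OF j K1(1,2) m1] and I2 = ins_J[OF j K2(1,2) m1]
    have e1: "\<bar>det (submatrix A {..<m} (insert j (insert_index j ` K1)))\<bar> = \<bar>minor_cols (trim A i j) K1\<bar>"
      using key_abs[OF A i j a I1(1,2)] I1(3) trim_minor_eq[OF A i j K1(1)] by simp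
    have e2: "\<bar>det (submatrix A {..<m} (insert j (insert_index j ` K2)))\<bar> = \<bar>minor_cols (trim A i j) K2\<bar>"
      using key_abs[OF A i j a I2(1,2)] I2(3) trim_minor_eq[OF A i j K2(1)] by simp
    have n1: "det (submatrix A {..<m} (insert j (insert_index j ` K1))) \<noteq> 0" using e1 K1(3) by auto
    have n2: "det (submatrix A {..<m} (insert j (insert_index j ` K2))) \<noteq> 0" using e2 K2(3) by auto
    show ?thesis using eqA I1(1,2) I2(1,2) n1 n2 e1 e2 by metis
  qed
  show ?thesis unfolding equimodular_def using fr em Tc by auto
qed

lemma supp_in:
  fixes A :: "rat mat"
  assumes A: "A \<in> carrier_mat m n" and i: "i < m" and J: "J \<subseteq> {..<n}" "card J = m"
    and d: "det (submatrix A {..<m} J) \<noteq> 0"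
  shows "\<exists>j\<in>J. A $$ (i,j) \<noteq> 0"
proof -
  have "(\<Sum>c\<in>J. (-1)^(i + card {x\<in>J. x < c}) * A $$ (i,c) * det (submatrix A ({..<m}-{i}) (J-{c}))) \<noteq> 0"
    using laplace_sub[OF A i J] d by simp
  then obtain c where "c \<in> J" "(-1)^(i + card {x\<in>J. x < c}) * A $$ (i,c) * det (submatrix A ({..<m}-{i}) (J-{c})) \<noteq> 0"
    using exists_term by blast
  then show ?thesis by auto
qed


lemma bwd:
  fixes A :: "rat mat"
  assumes A: "A \<in> carrier_mat m n" and i: "i < m"
    and row: "\<forall>l<n. A $$ (i,l) \<in> {0, 1, -1}"
    and tr: "\<forall>j<n. A $$ (i,j) \<noteq> 0 \<longrightarrow> equimodular (trim A i j)"
    and fr: "full_row_rank A"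
  shows "equimodular A"
proof -
  have ab: "\<bar>A $$ (i,l)\<bar> = 1" if "l < n" "A $$ (i,l) \<noteq> 0" for l
    using row that by auto
  have main: "\<bar>det (submatrix A {..<m} J)\<bar> = \<bar>det (submatrix A {..<m} J')\<bar>"
    if J: "J \<subseteq> {..<n}" "card J = m" "det (submatrix A {..<m} J) \<noteq> 0"
    and J': "J' \<subseteq> {..<n}" "card J' = m" "det (submatrix A {..<m} J') \<noteq> 0" for J J'
  proof -
    obtain j where j: "j \<in> J" "A $$ (i,j) \<noteq> 0" using supp_in[OF A i J(1,2,3)] by blast
    obtain j' where j': "j' \<in> J'" "A $$ (i,j') \<noteq> 0" using supp_in[OF A i J'(1,2,3)] by blast
    have jn: "j < n" using j J by auto
    have jn': "j' < n" using j' J' by auto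
    have aj: "\<bar>A $$ (i,j)\<bar> = 1" using ab jn j by blast
    have aj': "\<bar>A $$ (i,j')\<bar> = 1" using ab jn' j' by blast
    have ej: "equimodular (trim A i j)" using tr jn j by blast
    have ej': "equimodular (trim A i j')" using tr jn' j' by blast
    have fJ': "finite J'" using J' finite_subset by auto
    show ?thesis
    proof (cases "j \<in> J'")
      case True
      show ?thesis by (rule same_trim[OF A i jn aj ej J(1,2) j(1) J(3) J'(1,2) True J'(3)])
    next
      case False
      define P where "P = pivot A i j"
      have P: "P \<in> carrier_mat m n" unfolding P_def by (rule pivot_carrier[OF A])
      have dPA: "det (submatrix P {..<m} J') = det (submatrix A {..<m} J') / A $$ (i,j)"
        unfolding P_def by (rule det_pivot_sub[OF A i jn j(2) J'(1,2)])
      have dP: "det (submatrix P {..<m} J') \<noteq> 0" using dPA J'(3) j(2) by simp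
      have absPA: "\<bar>det (submatrix P {..<m} J')\<bar> = \<bar>det (submatrix A {..<m} J')\<bar>"
        using dPA aj by (simp add: abs_divide)
      define tm where "tm c = (-1)^(i + card {x\<in>J'. x < c}) * P $$ (i,c) * det (submatrix P ({..<m}-{i}) (J'-{c}))" for c
      have lap: "det (submatrix P {..<m} J') = (\<Sum>c\<in>J'. tm c)"
        unfolding tm_def by (rule laplace_sub[OF P i J'(1,2)])
      have Kfacts: "insert j (J'-{c}) \<subseteq> {..<n} \<and> card (insert j (J'-{c})) = m \<and> j \<in> insert j (J'-{c})
          \<and> insert j (J'-{c}) - {j} = J'-{c}" if c: "c \<in> J'" for c
      proof -
        have "card (J'-{c}) = m - 1" using c fJ' J' by auto
        moreover have "j \<notin> J'-{c}" using False by auto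
        moreover have "m \<ge> 1" using i by auto
        ultimately show ?thesis using J' jn fJ' by auto
      qed
      show ?thesis
      proof (cases "\<exists>c\<in>J'. c \<noteq> j' \<and> tm c \<noteq> 0")
        case True
        then obtain c where c: "c \<in> J'" "c \<noteq> j'" "tm c \<noteq> 0" by blast
        have D: "det (submatrix P ({..<m}-{i}) (J'-{c})) \<noteq> 0" using c(3) unfolding tm_def by auto
        define K where "K = insert j (J'-{c})"
        have K: "K \<subseteq> {..<n}" "card K = m" "j \<in> K" "K - {j} = J'-{c}" using Kfacts[OF c(1)] unfolding K_def by auto
        have dK: "\<bar>det (submatrix A {..<m} K)\<bar> = \<bar>det (submatrix P ({..<m}-{i}) (J'-{c}))\<bar>"
          using key_abs[OF A i jn aj K(1,2,3)] K(4) unfolding P_def by simp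
        have nK: "det (submatrix A {..<m} K) \<noteq> 0" using dK D by auto
        have j'K: "j' \<in> K" using j'(1) c(2) unfolding K_def by auto
        have e1: "\<bar>det (submatrix A {..<m} J)\<bar> = \<bar>det (submatrix A {..<m} K)\<bar>"
          by (rule same_trim[OF A i jn aj ej J(1,2) j(1) J(3) K(1,2,3) nK])
        have e2: "\<bar>det (submatrix A {..<m} K)\<bar> = \<bar>det (submatrix A {..<m} J')\<bar>"
          by (rule same_trim[OF A i jn' aj' ej' K(1,2) j'K nK J'(1,2) j'(1) J'(3)])
        show ?thesis using e1 e2 by simp
      next
        case False
        then have z: "tm c = 0" if "c \<in> J' - {j'}" for c using that by auto
        have "(\<Sum>c\<in>J'. tm c) = tm j' + (\<Sum>c\<in>J'-{j'}. tm c)" using sum.remove[OF fJ' j'(1)] by blast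
        also have "(\<Sum>c\<in>J'-{j'}. tm c) = 0" using z by simp
        finally have s1: "det (submatrix P {..<m} J') = tm j'" using lap by simp
        have Pij': "P $$ (i,j') = A $$ (i,j') / A $$ (i,j)" unfolding P_def using pivot_index[OF A i jn'] by simp
        have absP: "\<bar>P $$ (i,j')\<bar> = 1" using Pij' aj aj' by (simp add: abs_divide)
        have s2: "\<bar>det (submatrix P {..<m} J')\<bar> = \<bar>det (submatrix P ({..<m}-{i}) (J'-{j'}))\<bar>"
          using s1 absP unfolding tm_def by (simp add: abs_mult)
        define K where "K = insert j (J'-{j'})"
        have K: "K \<subseteq> {..<n}" "card K = m" "j \<in> K" "K - {j} = J'-{j'}" using Kfacts[OF j'(1)] unfolding K_def by auto
        have dK: "\<bar>det (submatrix A {..<m} K)\<bar> = \<bar>det (submatrix P ({..<m}-{i}) (J'-{j'}))\<bar>"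
          using key_abs[OF A i jn aj K(1,2,3)] K(4) unfolding P_def by simp
        have eK: "\<bar>det (submatrix A {..<m} K)\<bar> = \<bar>det (submatrix A {..<m} J')\<bar>" using dK s2 absPA by simp
        have nK: "det (submatrix A {..<m} K) \<noteq> 0" using eK J'(3) by auto
        have e1: "\<bar>det (submatrix A {..<m} J)\<bar> = \<bar>det (submatrix A {..<m} K)\<bar>"
          by (rule same_trim[OF A i jn aj ej J(1,2) j(1) J(3) K(1,2,3) nK])
        show ?thesis using e1 eK by simp
      qed
    qed
  qed
  show ?thesis unfolding equimodular_def minor_cols_def using fr main A by auto
qed

theorem mainTheorem3:
  fixes A :: "rat mat" and m n i :: nat
  assumes "A \<in> carrier_mat m n"
    and "m \<ge> 2"
    and "full_row_rank A"
    and "i < m"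
    and "\<forall>l<n. A $$ (i,l) \<in> {0, 1, -1}"
  shows "equimodular A \<longleftrightarrow> (\<forall>j<n. A $$ (i,j) \<noteq> 0 \<longrightarrow> equimodular (trim A i j))"
proof
  assume e: "equimodular A"
  show "\<forall>j<n. A $$ (i,j) \<noteq> 0 \<longrightarrow> equimodular (trim A i j)"
  proof (intro allI impI)
    fix j assume j: "j < n" and a: "A $$ (i,j) \<noteq> 0"
    have "\<bar>A $$ (i,j)\<bar> = 1" using assms(5) j a by auto
    then show "equimodular (trim A i j)" by (rule fwd[OF assms(1) assms(4) j _ e])
  qed
next
  assume "\<forall>j<n. A $$ (i,j) \<noteq> 0 \<longrightarrow> equimodular (trim A i j)"
  then show "equimodular A" by (rule bwd[OF assms(1) assms(4) assms(5) _ assms(3)])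
qed

end
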